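(* Let $K\ge 1$ be an integer, $\epsilon>0$, and $\tau_r> 0$. Let $\mathbf{s}=(s_0,\dots,s_{K-1})\in\mathbb{C}^K$ be a fixed (deterministic) vector, and let $\mathbf{d}=\mathbf{s}+\boldsymbol{\xi}$, where $\boldsymbol{\xi}=(\xi_0,\dots,\xi_{K-1})$ is a random vector whose $2K$ real components $\Re\xi_0,\dots,\Re\xi_{K-1},\Im\xi_0,\dots,\Im\xi_{K-1}$ are independent with each $\sim\mathcal{N}(0,\epsilon^2)$ (mean $0$, standard deviation $\epsilon$). For $\mathbf{x}\in\mathbb{C}^K$ define the DFT $\widehat{x}_k=\sum_{j=0}^{K-1}x_j e^{-2\pi i jk/K}$, with inverse $x_k=\frac1K\sum_{j=0}^{K-1}\widehat{x}_j e^{2\pi i jk/K}$. Define the denoised vector $\mathbf{r}\in\mathbb{C}^K$ by $\widehat{r}_k=\widehat{d}_k$ if $|\widehat{d}_k|\ge\tau_r$ and $\widehat{r}_k=0$ otherwise, and $\mathbf{r}$ the inverse DFT of $\widehat{\mathbf{r}}$. Then $$\frac1K\,\mathbb{E}\big[\|\mathbf{r}-\mathbf{s}\|_2^2\big]\le 2\epsilon^2\,G(\tau_r,K,\epsilon,\mathbf{s}),$$ where, with $q(z)=e^{-z}(1+z)$, $\mathbb{I}$ denoting indicator functions and $\operatorname{Erf}(z)=\frac{2}{\sqrt\pi}\int_0^z e^{-t^2}dt$, $$G(\tau_r,K,\epsilon,\mathbf{s})=\frac1K\sum_{k=0}^{K-1}\Big[\mathbb{I}_{\tau_r\ge|\widehat{s}_k|}\,q\Big(\frac{(\tau_r-|\widehat{s}_k|)^2}{2\epsilon^2K}\Big)+\mathbb{I}_{\tau_r<|\widehat{s}_k|}\Big]$$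 $$+\frac{1}{2K\epsilon^2}\sum_{k=0}^{K-1}\frac{|\widehat{s}_k|^2}{4K}\Big[\operatorname{Erf}\Big(\tfrac{-\Re\widehat{s}_k+\tau_r}{\sqrt{2\epsilon^2K}}\Big)-\operatorname{Erf}\Big(\tfrac{-\Re\widehat{s}_k-\tau_r}{\sqrt{2\epsilon^2K}}\Big)\Big]\Big[\operatorname{Erf}\Big(\tfrac{-\Im\widehat{s}_k+\tau_r}{\sqrt{2\epsilon^2K}}\Big)-\operatorname{Erf}\Big(\tfrac{-\Im\widehat{s}_k-\tau_r}{\sqrt{2\epsilon^2K}}\Big)\Big].$$
   Context: $\|\mathbf{x}\|_2=(\sum_k|x_k|^2)^{1/2}$ is the Euclidean norm on $\mathbb{C}^K$. The vector $\mathbf{s}$ models a noiseless signal, $\mathbf{d}$ the noisy data, and $\mathbf{r}$ the Fourier hard-thresholded (denoised) reconstruction with threshold $\tau_r$; $\widehat{s}_k,\widehat{d}_k$ are the DFT coefficients of $\mathbf{s},\mathbf{d}$ under the stated convention. *)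

theory Defs
  imports "HOL-Probability.Probability"
begin

definition dft :: "nat \<Rightarrow> (nat \<Rightarrow> complex) \<Rightarrow> nat \<Rightarrow> complex" where
  "dft K x k = (\<Sum>j<K. x j * cis (- 2 * pi * real j * real k / real K))"

definition idft :: "nat \<Rightarrow> (nat \<Rightarrow> complex) \<Rightarrow> nat \<Rightarrow> complex" where
  "idft K y k = (1 / of_nat K) * (\<Sum>j<K. y j * cis (2 * pi * real j * real k / real K))"

definition sqnorm :: "nat \<Rightarrow> (nat \<Rightarrow> complex) \<Rightarrow> real" where
  "sqnorm K x = (\<Sum>k<K. (cmod (x k))\<^sup>2)"

definition hard_threshold :: "nat \<Rightarrow> real \<Rightarrow> (nat \<Rightarrow> complex) \<Rightarrow> nat \<Rightarrow> complex" where
  "hard_threshold K tau d =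
     idft K (\<lambda>k. if cmod (dft K d k) \<ge> tau then dft K d k else 0)"

text \<open>Error function (signed interval integral).\<close>
definition Erf :: "real \<Rightarrow> real" where
  "Erf z = 2 / sqrt pi * (LBINT t=0..z. exp (- (t\<^sup>2)))"

definition qfun :: "real \<Rightarrow> real" where
  "qfun z = exp (- z) * (1 + z)"

definition G :: "real \<Rightarrow> nat \<Rightarrow> real \<Rightarrow> (nat \<Rightarrow> complex) \<Rightarrow> real" where
  "G tau K eps s =
     (1 / real K) * (\<Sum>k<K.
        (if tau \<ge> cmod (dft K s k)
         then qfun ((tau - cmod (dft K s k))\<^sup>2 / (2 * eps\<^sup>2 * real K)) else 0)
        + (if tau < cmod (dft K s k) then 1 else 0))
   + (1 / (2 * real K * eps\<^sup>2)) * (\<Sum>k<K.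
        (cmod (dft K s k))\<^sup>2 / (4 * real K)
        * (Erf ((- Re (dft K s k) + tau) / sqrt (2 * eps\<^sup>2 * real K))
           - Erf ((- Re (dft K s k) - tau) / sqrt (2 * eps\<^sup>2 * real K)))
        * (Erf ((- Im (dft K s k) + tau) / sqrt (2 * eps\<^sup>2 * real K))
           - Erf ((- Im (dft K s k) - tau) / sqrt (2 * eps\<^sup>2 * real K))))"

text \<open>Law of the noise: 2K independent N(0,eps^2) real coordinates; coordinate j<K is
  Re xi_j and coordinate K+j is Im xi_j.\<close>
definition noise_measure :: "nat \<Rightarrow> real \<Rightarrow> (nat \<Rightarrow> real) measure" where
  "noise_measure K eps = PiM {..<2*K} (\<lambda>_. density lborel (normal_density 0 eps))"

definition noise_vec :: "nat \<Rightarrow> (nat \<Rightarrow> real) \<Rightarrow> nat \<Rightarrow> complex" where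
  "noise_vec K w j = Complex (w j) (w (K + j))"

end

theory Submission
  imports Defs
begin


lemma cis_sum_orth:
  assumes "a < K" "b < K"
  shows "(\<Sum>k<K. cis (2 * pi * real k * (real a - real b) / real K)) = (if a = b then of_nat K else 0)"
proof (cases "a = b")
  case True then show ?thesis by simp
next
  case False
  define z where "z = cis (2 * pi * (real a - real b) / real K)"
  have K0: "K > 0" using assms by auto
  have eq: "cis (2 * pi * real k * (real a - real b) / real K) = z ^ k" for k
  proof -
    have "z ^ k = cis (real k * (2 * pi * (real a - real b) / real K))"
      unfolding z_def using Complex.DeMoivre[of "2 * pi * (real a - real b) / real K" k] by simp
    thus ?thesis by (simp add: field_simps)
  qed
  have zK: "z ^ K = 1"
  proof -
    have "z ^ K = cis (2 * pi * (real a - real b))"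
      unfolding z_def Complex.DeMoivre using K0 by simp
    also have "\<dots> = cis (2 * pi * of_int (int a - int b))" by simp
    also have "\<dots> = 1" by (rule cis_multiple_2pi) simp
    finally show ?thesis .
  qed
  have z1: "z \<noteq> 1"
  proof
    assume "z = 1"
    then have "cos (2 * pi * (real a - real b) / real K) = 1"
      by (metis z_def cis.sel(1) one_complex.sel(1))
    then obtain m :: int where m0: "2 * pi * (real a - real b) / real K = of_int m * 2 * pi"
      by (metis cos_one_2pi_int)
    hence m: "2 * pi * (real a - real b) / real K = 2 * pi * of_int m" by simp
    hence "2 * pi * ((real a - real b) / real K) = 2 * pi * of_int m" by simp
    hence "(real a - real b) / real K = of_int m" by (subst (asm) mult_left_cancel) auto
    hence "real a - real b = real K * of_int m" using K0 by (simp add: field_simps)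
    hence "int a - int b = int K * m" by (metis of_int_eq_iff of_int_mult of_int_of_nat_eq of_int_diff)
    moreover have "\<bar>int a - int b\<bar> < int K" using assms by auto
    ultimately have "\<bar>int K * m\<bar> < int K" by simp
    hence "int K * \<bar>m\<bar> < int K * 1" by (simp add: abs_mult)
    hence "\<bar>m\<bar> < 1" using mult_less_cancel_left_pos[of "int K" "\<bar>m\<bar>" 1] K0 by linarith
    hence "m = 0" by simp
    with \<open>int a - int b = int K * m\<close> False show False by simp
  qed
  have "(\<Sum>k<K. z ^ k) = 0"
    using z1 zK by (simp add: geometric_sum)
  then show ?thesis using False eq by simp
qed

lemma idft_dft:
  assumes "k < K"
  shows "idft K (dft K x) k = x k"
proof -
  have K0: "real K \<noteq> 0" using assms by simp
  have "(\<Sum>j<K. dft K x j * cis (2 * pi * real j * real k / real K))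
      = (\<Sum>j<K. \<Sum>l<K. x l * (cis (- 2 * pi * real l * real j / real K) * cis (2 * pi * real j * real k / real K)))"
    unfolding dft_def by (simp add: sum_distrib_right mult.assoc)
  also have "\<dots> = (\<Sum>l<K. \<Sum>j<K. x l * (cis (- 2 * pi * real l * real j / real K) * cis (2 * pi * real j * real k / real K)))"
    by (rule sum.swap)
  also have "\<dots> = (\<Sum>l<K. x l * (\<Sum>j<K. cis (2 * pi * real j * (real k - real l) / real K)))"
    by (simp add: sum_distrib_left Complex.cis_mult algebra_simps add_divide_distrib[symmetric] diff_divide_distrib[symmetric])
  also have "\<dots> = (\<Sum>l<K. x l * (if k = l then of_nat K else 0))"
    by (intro sum.cong refl) (simp add: cis_sum_orth assms)
  also have "\<dots> = x k * of_nat K" using assms by (simp add: if_distrib cong: if_cong)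
  finally show ?thesis unfolding idft_def using K0 by simp
qed

lemma sqnorm_idft:
  assumes "K > 0"
  shows "sqnorm K (idft K y) = (1 / real K) * (\<Sum>k<K. (cmod (y k))\<^sup>2)"
proof -
  have K0: "real K \<noteq> 0" using assms by simp
  have "complex_of_real (sqnorm K (idft K y)) = (\<Sum>k<K. idft K y k * cnj (idft K y k))"
    unfolding sqnorm_def by (simp only: of_real_sum complex_norm_square)
  also have "\<dots> = (\<Sum>k<K. (1 / of_nat K)^2 * (\<Sum>j<K. \<Sum>l<K. y j * cnj (y l) *
        (cis (2 * pi * real j * real k / real K) * cis (- (2 * pi * real l * real k / real K)))))"
    unfolding idft_def
    apply (simp add: sum_distrib_left sum_distrib_right power2_eq_square cis_cnj mult_ac)
    apply (rule sum.cong[OF refl])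
    apply (rule sum.swap)
    done
  also have "\<dots> = (1 / of_nat K)^2 * (\<Sum>j<K. \<Sum>l<K. y j * cnj (y l) *
        (\<Sum>k<K. cis (2 * pi * real k * (real j - real l) / real K)))"
  proof -
    have "(\<Sum>k<K. \<Sum>j<K. \<Sum>l<K. y j * cnj (y l) *
        (cis (2 * pi * real j * real k / real K) * cis (- (2 * pi * real l * real k / real K))))
      = (\<Sum>j<K. \<Sum>k<K. \<Sum>l<K. y j * cnj (y l) *
        (cis (2 * pi * real j * real k / real K) * cis (- (2 * pi * real l * real k / real K))))"
      by (rule sum.swap)
    also have "\<dots> = (\<Sum>j<K. \<Sum>l<K. \<Sum>k<K. y j * cnj (y l) *
        (cis (2 * pi * real j * real k / real K) * cis (- (2 * pi * real l * real k / real K))))"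
      by (rule sum.cong[OF refl], rule sum.swap)
    also have "\<dots> = (\<Sum>j<K. \<Sum>l<K. y j * cnj (y l) *
        (\<Sum>k<K. cis (2 * pi * real k * (real j - real l) / real K)))"
      by (simp add: sum_distrib_left Complex.cis_mult algebra_simps diff_divide_distrib[symmetric])
    finally show ?thesis by (simp add: sum_distrib_left[symmetric])
  qed
  also have "\<dots> = (1 / of_nat K)^2 * (\<Sum>j<K. \<Sum>l<K. y j * cnj (y l) * (if j = l then of_nat K else 0))"
    by (intro arg_cong2[where f="(*)"] sum.cong refl) (simp add: cis_sum_orth)
  also have "\<dots> = (1 / of_nat K)^2 * (\<Sum>j<K. y j * cnj (y j) * of_nat K)"
    by (simp add: if_distrib cong: if_cong)
  also have "\<dots> = (1 / of_nat K)^2 * (\<Sum>j<K. complex_of_real ((cmod (y j))\<^sup>2) * of_nat K)"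
    by (simp only: complex_norm_square)
  also have "\<dots> = complex_of_real ((1 / real K) * (\<Sum>k<K. (cmod (y k))\<^sup>2))"
    using K0 by (simp add: complex_norm_square sum_distrib_left sum_distrib_right power2_eq_square field_simps)
  finally show ?thesis by (simp only: of_real_eq_iff)
qed

lemma dft_add: "dft K (\<lambda>j. x j + y j) k = dft K x k + dft K y k"
  unfolding dft_def by (simp add: distrib_right sum.distrib)

lemma idft_diff: "idft K x k - idft K y k = idft K (\<lambda>j. x j - y j) k"
  unfolding idft_def right_diff_distrib[symmetric] sum_subtractf[symmetric]
  by (simp add: left_diff_distrib)

definition errf :: "complex \<Rightarrow> real \<Rightarrow> complex \<Rightarrow> real" where
  "errf a tau z = (if cmod (a + z) \<ge> tau then (cmod z)\<^sup>2 else (cmod a)\<^sup>2)"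

lemma sqnorm_ht:
  assumes "K > 0"
  shows "sqnorm K (\<lambda>k. hard_threshold K tau (\<lambda>j. s j + xi j) k - s k)
       = (1 / real K) * (\<Sum>k<K. errf (dft K s k) tau (dft K xi k))"
proof -
  have "sqnorm K (\<lambda>k. hard_threshold K tau (\<lambda>j. s j + xi j) k - s k)
      = sqnorm K (idft K (\<lambda>k. (if cmod (dft K (\<lambda>j. s j + xi j) k) \<ge> tau then dft K (\<lambda>j. s j + xi j) k else 0) - dft K s k))"
    unfolding sqnorm_def hard_threshold_def
    by (intro sum.cong refl) (simp add: idft_diff[symmetric] idft_dft)
  also have "\<dots> = (1 / real K) * (\<Sum>k<K. errf (dft K s k) tau (dft K xi k))"
    using assms unfolding sqnorm_idft[OF assms]
    by (intro arg_cong2[where f="(*)"] sum.cong refl) (auto simp: dft_add errf_def)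
  finally show ?thesis .
qed




lemma measurable_Complex[measurable (raw)]:
  "f \<in> borel_measurable M \<Longrightarrow> g \<in> borel_measurable M \<Longrightarrow> (\<lambda>x. Complex (f x) (g x)) \<in> borel_measurable M"
  unfolding Complex_eq by (intro borel_measurable_add borel_measurable_times measurable_const) (auto intro: measurable_compose[OF _ borel_measurable_of_real])

lemma sh1:
  fixes F :: "complex \<Rightarrow> ennreal"
  assumes [measurable]: "F \<in> borel_measurable borel"
  shows "(\<integral>\<^sup>+b. \<integral>\<^sup>+a. F (Complex (a + k * b) b) \<partial>lborel \<partial>lborel) = (\<integral>\<^sup>+b. \<integral>\<^sup>+a. F (Complex a b) \<partial>lborel \<partial>lborel)"
proof (rule nn_integral_cong)
  fix b :: real
  show "(\<integral>\<^sup>+a. F (Complex (a + k * b) b) \<partial>lborel) = (\<integral>\<^sup>+a. F (Complex a b) \<partial>lborel)"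
    using nn_integral_real_affine[of "\<lambda>a. F (Complex a b)" 1 "k * b"] by (simp add: add.commute)
qed

lemma sh2:
  fixes F :: "complex \<Rightarrow> ennreal"
  assumes [measurable]: "F \<in> borel_measurable borel"
  shows "(\<integral>\<^sup>+b. \<integral>\<^sup>+a. F (Complex a (b + k * a)) \<partial>lborel \<partial>lborel) = (\<integral>\<^sup>+b. \<integral>\<^sup>+a. F (Complex a b) \<partial>lborel \<partial>lborel)"
proof -
  have "(\<integral>\<^sup>+b. \<integral>\<^sup>+a. F (Complex a (b + k * a)) \<partial>lborel \<partial>lborel) = (\<integral>\<^sup>+a. \<integral>\<^sup>+b. F (Complex a (b + k * a)) \<partial>lborel \<partial>lborel)"
    by (rule lborel_pair.Fubini') measurable
  also have "\<dots> = (\<integral>\<^sup>+a. \<integral>\<^sup>+b. F (Complex a b) \<partial>lborel \<partial>lborel)"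
  proof (rule nn_integral_cong)
    fix a :: real
    show "(\<integral>\<^sup>+b. F (Complex a (b + k * a)) \<partial>lborel) = (\<integral>\<^sup>+b. F (Complex a b) \<partial>lborel)"
      using nn_integral_real_affine[of "\<lambda>b. F (Complex a b)" 1 "k * a"] by (simp add: add.commute)
  qed
  also have "\<dots> = (\<integral>\<^sup>+b. \<integral>\<^sup>+a. F (Complex a b) \<partial>lborel \<partial>lborel)"
    by (rule lborel_pair.Fubini'[symmetric]) measurable
  finally show ?thesis .
qed

lemma refl2:
  fixes F :: "complex \<Rightarrow> ennreal"
  assumes [measurable]: "F \<in> borel_measurable borel"
  shows "(\<integral>\<^sup>+b. \<integral>\<^sup>+a. F (Complex (- a) (- b)) \<partial>lborel \<partial>lborel) = (\<integral>\<^sup>+b. \<integral>\<^sup>+a. F (Complex a b) \<partial>lborel \<partial>lborel)"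
proof -
  have "(\<integral>\<^sup>+b. \<integral>\<^sup>+a. F (Complex (- a) (- b)) \<partial>lborel \<partial>lborel) = (\<integral>\<^sup>+b. \<integral>\<^sup>+a. F (Complex a (- b)) \<partial>lborel \<partial>lborel)"
  proof (rule nn_integral_cong)
    fix b :: real
    show "(\<integral>\<^sup>+a. F (Complex (- a) (- b)) \<partial>lborel) = (\<integral>\<^sup>+a. F (Complex a (- b)) \<partial>lborel)"
      using nn_integral_real_affine[of "\<lambda>a. F (Complex a (- b))" "-1" 0] by simp
  qed
  also have "\<dots> = (\<integral>\<^sup>+b. \<integral>\<^sup>+a. F (Complex a b) \<partial>lborel \<partial>lborel)"
    using nn_integral_real_affine[of "\<lambda>b. \<integral>\<^sup>+a. F (Complex a b) \<partial>lborel" "-1" 0] by simp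
  finally show ?thesis .
qed

lemma rot_lborel:
  fixes F :: "complex \<Rightarrow> ennreal"
  assumes [measurable]: "F \<in> borel_measurable borel"
  shows "(\<integral>\<^sup>+b. \<integral>\<^sup>+a. F (Complex a b * cis t) \<partial>lborel \<partial>lborel) = (\<integral>\<^sup>+b. \<integral>\<^sup>+a. F (Complex a b) \<partial>lborel \<partial>lborel)"
proof -
  define c s where "c = cos t" and "s = sin t"
  have cs: "c\<^sup>2 + s\<^sup>2 = 1" unfolding c_def s_def by simp
  have rot: "Complex a b * cis t = Complex (a * c - b * s) (a * s + b * c)" for a b
    unfolding c_def s_def by (simp add: complex_eq_iff)
  show ?thesis
  proof (cases "s = 0")
    case True
    then have "c = 1 \<or> c = -1" using cs by (simp add: power2_eq_1_iff)
    then show ?thesis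
    proof
      assume "c = 1" then show ?thesis using True by (simp add: rot)
    next
      assume "c = -1" then show ?thesis using True refl2[OF assms] by (simp add: rot)
    qed
  next
    case False
    define \<alpha> where "\<alpha> = (c - 1) / s"
    define G1 where "G1 z = F (Complex (Re z + \<alpha> * Im z) (Im z))" for z
    define G2 where "G2 z = G1 (Complex (Re z) (Im z + s * Re z))" for z
    have [measurable]: "G1 \<in> borel_measurable borel" "G2 \<in> borel_measurable borel"
      unfolding G1_def[abs_def] G2_def[abs_def] by measurable
    have key: "Complex a b * cis t = Complex ((a + \<alpha> * b) + \<alpha> * (b + s * (a + \<alpha> * b))) (b + s * (a + \<alpha> * b))" for a b
    proof -
      have e1: "\<alpha> * s = c - 1" using False by (simp add: \<alpha>_def)
      have e2: "2 * \<alpha> + \<alpha> * \<alpha> * s = - s"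
      proof -
        have c1: "c = 1 + \<alpha> * s" using \<open>\<alpha> * s = c - 1\<close> by simp
        have "2 * \<alpha> + \<alpha> * \<alpha> * s = \<alpha> * (1 + c)" unfolding c1 by (simp add: algebra_simps)
        also have "\<dots> = (c * c - 1) / s" by (simp add: \<alpha>_def algebra_simps)
        also have "\<dots> = - s" using cs False by (simp add: field_simps power2_eq_square)
        finally show ?thesis .
      qed
      have "(a + \<alpha> * b) + \<alpha> * (b + s * (a + \<alpha> * b)) = a * (1 + \<alpha> * s) + b * (2 * \<alpha> + \<alpha> * \<alpha> * s)"
        by (simp add: algebra_simps)
      also have "\<dots> = a * c - b * s" using e1 e2 by simp
      finally have 1: "(a + \<alpha> * b) + \<alpha> * (b + s * (a + \<alpha> * b)) = a * c - b * s" .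
      have "b + s * (a + \<alpha> * b) = a * s + b * (1 + \<alpha> * s)" by (simp add: algebra_simps)
      also have "\<dots> = a * s + b * c" using e1 e2 by simp
      finally have 2: "b + s * (a + \<alpha> * b) = a * s + b * c" .
      show ?thesis unfolding rot by (rule arg_cong2[where f=Complex, OF 1[symmetric] 2[symmetric]])
    qed
    have "(\<integral>\<^sup>+b. \<integral>\<^sup>+a. F (Complex a b * cis t) \<partial>lborel \<partial>lborel) = (\<integral>\<^sup>+b. \<integral>\<^sup>+a. G2 (Complex (a + \<alpha> * b) b) \<partial>lborel \<partial>lborel)"
      by (simp add: key G1_def G2_def)
    also have "\<dots> = (\<integral>\<^sup>+b. \<integral>\<^sup>+a. G2 (Complex a b) \<partial>lborel \<partial>lborel)" by (rule sh1) measurable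
    also have "\<dots> = (\<integral>\<^sup>+b. \<integral>\<^sup>+a. G1 (Complex a (b + s * a)) \<partial>lborel \<partial>lborel)" by (simp add: G2_def)
    also have "\<dots> = (\<integral>\<^sup>+b. \<integral>\<^sup>+a. G1 (Complex a b) \<partial>lborel \<partial>lborel)" by (rule sh2) measurable
    also have "\<dots> = (\<integral>\<^sup>+b. \<integral>\<^sup>+a. F (Complex (a + \<alpha> * b) b) \<partial>lborel \<partial>lborel)" by (simp add: G1_def)
    also have "\<dots> = (\<integral>\<^sup>+b. \<integral>\<^sup>+a. F (Complex a b) \<partial>lborel \<partial>lborel)" by (rule sh1) measurable
    finally show ?thesis .
  qed
qed

abbreviation Nm :: "real \<Rightarrow> real measure" where
  "Nm \<sigma> \<equiv> density lborel (\<lambda>x. ennreal (normal_density 0 \<sigma> x))"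

lemma sf_Nm: "sigma_finite_measure (Nm \<sigma>)"
  by (subst sigma_finite_measure.sigma_finite_iff_density_finite[OF sigma_finite_lborel]) auto

lemma meas_inner_Nm[measurable]:
  fixes G :: "complex \<Rightarrow> ennreal"
  assumes [measurable]: "G \<in> borel_measurable borel"
  shows "(\<lambda>b. \<integral>\<^sup>+a. G (Complex a b) \<partial>Nm \<sigma>) \<in> borel_measurable borel"
  apply (rule sigma_finite_measure.borel_measurable_nn_integral[OF sf_Nm])
  apply (subst measurable_cong_sets[OF sets_pair_measure_cong[OF refl sets_density] refl])
  apply measurable
  done

lemma dens2:
  fixes G :: "complex \<Rightarrow> ennreal"
  assumes [measurable]: "G \<in> borel_measurable borel"
  shows "(\<integral>\<^sup>+b. \<integral>\<^sup>+a. G (Complex a b) \<partial>Nm \<sigma> \<partial>Nm \<sigma>)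
       = (\<integral>\<^sup>+b. \<integral>\<^sup>+a. ennreal (normal_density 0 \<sigma> a * normal_density 0 \<sigma> b) * G (Complex a b) \<partial>lborel \<partial>lborel)"
proof -
  have "(\<integral>\<^sup>+b. \<integral>\<^sup>+a. G (Complex a b) \<partial>Nm \<sigma> \<partial>Nm \<sigma>)
      = (\<integral>\<^sup>+b. ennreal (normal_density 0 \<sigma> b) * \<integral>\<^sup>+a. G (Complex a b) \<partial>Nm \<sigma> \<partial>lborel)"
    by (rule nn_integral_density) measurable
  also have "\<dots> = (\<integral>\<^sup>+b. ennreal (normal_density 0 \<sigma> b) * \<integral>\<^sup>+a. ennreal (normal_density 0 \<sigma> a) * G (Complex a b) \<partial>lborel \<partial>lborel)"
    by (intro nn_integral_cong arg_cong2[where f="(*)"] refl nn_integral_density) measurable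
  also have "\<dots> = (\<integral>\<^sup>+b. \<integral>\<^sup>+a. ennreal (normal_density 0 \<sigma> a * normal_density 0 \<sigma> b) * G (Complex a b) \<partial>lborel \<partial>lborel)"
    by (intro nn_integral_cong) (simp add: nn_integral_cmult[symmetric] ennreal_mult' mult_ac)
  finally show ?thesis .
qed

lemma nd_prod: "normal_density 0 \<sigma> a * normal_density 0 \<sigma> b = (1 / sqrt (2 * pi * \<sigma>\<^sup>2))\<^sup>2 * exp (- (a\<^sup>2 + b\<^sup>2) / (2 * \<sigma>\<^sup>2))"
  unfolding normal_density_def by (simp add: power2_eq_square mult_exp_exp add_divide_distrib diff_divide_distrib mult_ac)

lemma rot_normal:
  fixes G :: "complex \<Rightarrow> ennreal"
  assumes [measurable]: "G \<in> borel_measurable borel"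
  shows "(\<integral>\<^sup>+b. \<integral>\<^sup>+a. G (Complex a b * cis t) \<partial>Nm \<sigma> \<partial>Nm \<sigma>) = (\<integral>\<^sup>+b. \<integral>\<^sup>+a. G (Complex a b) \<partial>Nm \<sigma> \<partial>Nm \<sigma>)"
proof -
  define H where "H z = ennreal (normal_density 0 \<sigma> (Re z) * normal_density 0 \<sigma> (Im z)) * G z" for z
  have [measurable]: "H \<in> borel_measurable borel" unfolding H_def[abs_def] by measurable
  have nr: "(Re (Complex a b * cis t))\<^sup>2 + (Im (Complex a b * cis t))\<^sup>2 = a\<^sup>2 + b\<^sup>2" for a b
  proof -
    have "(Re (Complex a b * cis t))\<^sup>2 + (Im (Complex a b * cis t))\<^sup>2 = (cmod (Complex a b * cis t))\<^sup>2"
      by (simp add: cmod_power2)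
    also have "\<dots> = (cmod (Complex a b))\<^sup>2" by (simp add: norm_mult)
    also have "\<dots> = a\<^sup>2 + b\<^sup>2" by (simp add: cmod_power2)
    finally show ?thesis .
  qed
  have "(\<integral>\<^sup>+b. \<integral>\<^sup>+a. G (Complex a b * cis t) \<partial>Nm \<sigma> \<partial>Nm \<sigma>)
      = (\<integral>\<^sup>+b. \<integral>\<^sup>+a. ennreal (normal_density 0 \<sigma> a * normal_density 0 \<sigma> b) * G (Complex a b * cis t) \<partial>lborel \<partial>lborel)"
    by (rule dens2[of "\<lambda>z. G (z * cis t)"]) measurable
  also have "\<dots> = (\<integral>\<^sup>+b. \<integral>\<^sup>+a. H (Complex a b * cis t) \<partial>lborel \<partial>lborel)"
    unfolding H_def by (simp only: nd_prod nr)
  also have "\<dots> = (\<integral>\<^sup>+b. \<integral>\<^sup>+a. H (Complex a b) \<partial>lborel \<partial>lborel)"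
    by (rule rot_lborel) measurable
  also have "\<dots> = (\<integral>\<^sup>+b. \<integral>\<^sup>+a. G (Complex a b) \<partial>Nm \<sigma> \<partial>Nm \<sigma>)"
    unfolding H_def by (simp add: dens2)
  finally show ?thesis .
qed

lemma conv1:
  fixes g :: "real \<Rightarrow> ennreal"
  assumes [measurable]: "g \<in> borel_measurable borel" and "\<sigma> > 0" "\<tau> > 0"
  shows "(\<integral>\<^sup>+a. \<integral>\<^sup>+x. g (a + x) \<partial>Nm \<tau> \<partial>Nm \<sigma>) = (\<integral>\<^sup>+z. g z \<partial>Nm (sqrt (\<sigma>\<^sup>2 + \<tau>\<^sup>2)))"
proof -
  have cv: "ennreal (normal_density 0 (sqrt (\<sigma>\<^sup>2 + \<tau>\<^sup>2)) z) = (\<integral>\<^sup>+y. ennreal (normal_density 0 \<tau> (z - y) * normal_density 0 \<sigma> y) \<partial>lborel)" for z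
    using fun_cong[OF conv_normal_density_zero_mean[OF assms(3,2)], of z] by (simp add: add.commute)
  have "(\<integral>\<^sup>+z. g z \<partial>Nm (sqrt (\<sigma>\<^sup>2 + \<tau>\<^sup>2))) = (\<integral>\<^sup>+z. ennreal (normal_density 0 (sqrt (\<sigma>\<^sup>2 + \<tau>\<^sup>2)) z) * g z \<partial>lborel)"
    by (rule nn_integral_density) measurable
  also have "\<dots> = (\<integral>\<^sup>+z. \<integral>\<^sup>+y. ennreal (normal_density 0 \<tau> (z - y) * normal_density 0 \<sigma> y) * g z \<partial>lborel \<partial>lborel)"
    unfolding cv by (intro nn_integral_cong nn_integral_multc[symmetric]) measurable
  also have "\<dots> = (\<integral>\<^sup>+y. \<integral>\<^sup>+z. ennreal (normal_density 0 \<tau> (z - y) * normal_density 0 \<sigma> y) * g z \<partial>lborel \<partial>lborel)"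
    by (rule lborel_pair.Fubini') measurable
  also have "\<dots> = (\<integral>\<^sup>+y. ennreal (normal_density 0 \<sigma> y) * \<integral>\<^sup>+x. ennreal (normal_density 0 \<tau> x) * g (y + x) \<partial>lborel \<partial>lborel)"
  proof (intro nn_integral_cong)
    fix y :: real
    have "(\<integral>\<^sup>+z. ennreal (normal_density 0 \<tau> (z - y) * normal_density 0 \<sigma> y) * g z \<partial>lborel)
       = (\<integral>\<^sup>+x. ennreal (normal_density 0 \<tau> (y + x - y) * normal_density 0 \<sigma> y) * g (y + x) \<partial>lborel)"
      using nn_integral_real_affine[of "\<lambda>z. ennreal (normal_density 0 \<tau> (z - y) * normal_density 0 \<sigma> y) * g z" 1 y] by simp
    also have "\<dots> = (\<integral>\<^sup>+x. ennreal (normal_density 0 \<sigma> y) * (ennreal (normal_density 0 \<tau> x) * g (y + x)) \<partial>lborel)"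
      by (intro nn_integral_cong) (simp add: ennreal_mult' mult_ac)
    also have "\<dots> = ennreal (normal_density 0 \<sigma> y) * \<integral>\<^sup>+x. ennreal (normal_density 0 \<tau> x) * g (y + x) \<partial>lborel"
      by (rule nn_integral_cmult) measurable
    finally show "(\<integral>\<^sup>+z. ennreal (normal_density 0 \<tau> (z - y) * normal_density 0 \<sigma> y) * g z \<partial>lborel) = \<dots>" .
  qed
  also have "\<dots> = (\<integral>\<^sup>+a. \<integral>\<^sup>+x. g (a + x) \<partial>Nm \<tau> \<partial>Nm \<sigma>)"
    by (simp add: nn_integral_density)
  finally show ?thesis ..
qed

lemma meas_Nm_pair[measurable (raw)]:
  "f \<in> borel_measurable (lborel \<Otimes>\<^sub>M lborel) \<Longrightarrow> f \<in> borel_measurable (Nm a \<Otimes>\<^sub>M Nm b)"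
  by (subst measurable_cong_sets[OF sets_pair_measure_cong[OF sets_density sets_density] refl])

lemma meas_nn_Nm[measurable (raw)]:
  "case_prod f \<in> borel_measurable (M \<Otimes>\<^sub>M lborel) \<Longrightarrow> (\<lambda>x. \<integral>\<^sup>+y. f x y \<partial>Nm \<sigma>) \<in> borel_measurable M"
  apply (rule sigma_finite_measure.borel_measurable_nn_integral[OF sf_Nm])
  apply (subst measurable_cong_sets[OF sets_pair_measure_cong[OF refl sets_density] refl])
  apply simp
  done

lemma psf_Nm: "pair_sigma_finite (Nm a) (Nm b)"
  by (intro pair_sigma_finite.intro sf_Nm)

definition Gint :: "real \<Rightarrow> nat \<Rightarrow> (complex \<Rightarrow> ennreal) \<Rightarrow> ennreal" where
  "Gint e n H = (if n = 0 then H 0 else (\<integral>\<^sup>+b. \<integral>\<^sup>+a. H (Complex a b) \<partial>Nm (e * sqrt n) \<partial>Nm (e * sqrt n)))"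

lemma meas_Gint[measurable]:
  fixes H :: "complex \<Rightarrow> ennreal"
  assumes [measurable]: "H \<in> borel_measurable borel"
  shows "(\<lambda>w. Gint e n (\<lambda>z. H (w + z))) \<in> borel_measurable borel"
  unfolding Gint_def by measurable

lemma cplx_add: "Complex a b + Complex c d = Complex (a + c) (b + d)"
  by (simp add: complex_eq_iff)

lemma conv2:
  fixes H :: "complex \<Rightarrow> ennreal"
  assumes [measurable]: "H \<in> borel_measurable borel" and e: "e > 0"
  shows "(\<integral>\<^sup>+b. \<integral>\<^sup>+a. Gint e n (\<lambda>z. H (Complex a b + z)) \<partial>Nm e \<partial>Nm e) = Gint e (Suc n) H"
proof (cases "n = 0")
  case True
  then show ?thesis by (simp add: Gint_def)
next
  case False
  define s where "s = e * sqrt n"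
  define r where "r = e * sqrt (Suc n)"
  have s: "s > 0" using e False by (simp add: s_def)
  have "e\<^sup>2 + s\<^sup>2 = r\<^sup>2"
    by (simp add: r_def s_def power_mult_distrib algebra_simps)
  hence r: "r = sqrt (e\<^sup>2 + s\<^sup>2)" using e by (simp add: r_def)
  have "(\<integral>\<^sup>+b. \<integral>\<^sup>+a. Gint e n (\<lambda>z. H (Complex a b + z)) \<partial>Nm e \<partial>Nm e)
      = (\<integral>\<^sup>+b. \<integral>\<^sup>+a. \<integral>\<^sup>+y. \<integral>\<^sup>+x. H (Complex (a + x) (b + y)) \<partial>Nm s \<partial>Nm s \<partial>Nm e \<partial>Nm e)"
    using False by (simp add: Gint_def s_def cplx_add)
  also have "\<dots> = (\<integral>\<^sup>+b. \<integral>\<^sup>+y. \<integral>\<^sup>+a. \<integral>\<^sup>+x. H (Complex (a + x) (b + y)) \<partial>Nm s \<partial>Nm e \<partial>Nm s \<partial>Nm e)"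
    by (intro nn_integral_cong pair_sigma_finite.Fubini'[OF psf_Nm]) measurable
  also have "\<dots> = (\<integral>\<^sup>+b. \<integral>\<^sup>+y. \<integral>\<^sup>+u. H (Complex u (b + y)) \<partial>Nm r \<partial>Nm s \<partial>Nm e)"
    unfolding r by (intro nn_integral_cong conv1 e s) measurable
  also have "\<dots> = (\<integral>\<^sup>+v. \<integral>\<^sup>+u. H (Complex u v) \<partial>Nm r \<partial>Nm r)"
    unfolding r by (intro conv1[of "\<lambda>v. \<integral>\<^sup>+u. H (Complex u v) \<partial>Nm (sqrt (e\<^sup>2 + s\<^sup>2))"] e s) measurable
  also have "\<dots> = Gint e (Suc n) H" by (simp add: Gint_def r_def)
  finally show ?thesis .
qed




lemma meas_comp_Nm[measurable (raw)]:
  "i \<in> I \<Longrightarrow> (\<lambda>w. w i) \<in> borel_measurable (PiM I (\<lambda>_. Nm e))"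
proof -
  assume "i \<in> I"
  then have "(\<lambda>w. w i) \<in> measurable (PiM I (\<lambda>_. Nm e)) (Nm e)" by measurable
  then show ?thesis by (simp add: measurable_cong_sets[OF refl sets_density])
qed

lemma meas_S:
  assumes "p ` J \<subseteq> I" "q ` J \<subseteq> I"
  shows "(\<lambda>w. \<Sum>j\<in>J. Complex (w (p j)) (w (q j)) * cis (th j)) \<in> borel_measurable (PiM I (\<lambda>_. Nm e))"
proof (rule borel_measurable_sum)
  fix j assume "j \<in> J"
  then have [measurable]: "p j \<in> I" "q j \<in> I" using assms by auto
  show "(\<lambda>w. Complex (w (p j)) (w (q j)) * cis (th j)) \<in> borel_measurable (PiM I (\<lambda>_. Nm e))"
    by measurable
qed

lemma psf_Nm_prod: "product_sigma_finite (\<lambda>_. Nm e)"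
  unfolding product_sigma_finite_def using sf_Nm by blast

lemma ind:
  fixes H :: "complex \<Rightarrow> ennreal" and p q :: "nat \<Rightarrow> nat" and th :: "nat \<Rightarrow> real" and I J :: "nat set"
  assumes [measurable]: "H \<in> borel_measurable borel" and e: "e > 0"
  shows "finite J \<Longrightarrow> finite I \<Longrightarrow> inj_on p J \<Longrightarrow> inj_on q J \<Longrightarrow> p ` J \<inter> q ` J = {} \<Longrightarrow>
    p ` J \<subseteq> I \<Longrightarrow> q ` J \<subseteq> I \<Longrightarrow>
    (\<integral>\<^sup>+w. H (c + (\<Sum>j\<in>J. Complex (w (p j)) (w (q j)) * cis (th j))) \<partial>PiM I (\<lambda>_. Nm e))
      = Gint e (card J) (\<lambda>z. H (c + z))"
proof (induction J arbitrary: I c rule: finite_induct)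
  case empty
  interpret prob_space "PiM I (\<lambda>_. Nm e)"
    by (intro prob_space_PiM prob_space_normal_density e)
  show ?case by (simp add: Gint_def emeasure_space_1)
next
  case (insert j J)
  interpret PS: product_sigma_finite "\<lambda>_. Nm e" by (rule psf_Nm_prod)
  define P Q where "P = p j" and "Q = q j"
  define I0 where "I0 = I - {P, Q}"
  define S where "S w = (\<Sum>i\<in>J. Complex (w (p i)) (w (q i)) * cis (th i))" for w :: "nat \<Rightarrow> real"
  have PQ: "P \<noteq> Q" using insert.prems(4) by (auto simp: P_def Q_def)
  have notJ: "P \<notin> p ` J" "P \<notin> q ` J" "Q \<notin> p ` J" "Q \<notin> q ` J"
    using insert.prems(2,3,4) insert.hyps(2) by (auto simp: P_def Q_def inj_on_def)
  have I: "I = insert P (insert Q I0)" "P \<notin> insert Q I0" "Q \<notin> I0" "finite I0" "finite (insert Q I0)"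
    using insert.prems(1,5,6) PQ by (auto simp: I0_def P_def Q_def)
  have sub0: "p ` J \<subseteq> I0" "q ` J \<subseteq> I0" using insert.prems(5,6) notJ by (auto simp: I0_def)
  have S_upd: "x \<notin> p ` J \<Longrightarrow> x \<notin> q ` J \<Longrightarrow> S (w(x := v)) = S w" for x v w
    unfolding S_def by (intro sum.cong refl) auto
  have sum_ins: "(\<Sum>i\<in>insert j J. Complex (w (p i)) (w (q i)) * cis (th i)) = Complex (w P) (w Q) * cis (th j) + S w" for w
    using insert.hyps by (simp add: S_def P_def Q_def)
  have mS0[measurable]: "S \<in> borel_measurable (PiM I0 (\<lambda>_. Nm e))"
    using meas_S[OF sub0] unfolding S_def[abs_def] .
  have sub1: "p ` J \<subseteq> insert Q I0" "q ` J \<subseteq> insert Q I0" using sub0 by auto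
  have mS1[measurable]: "S \<in> borel_measurable (PiM (insert Q I0) (\<lambda>_. Nm e))"
    using meas_S[OF sub1] unfolding S_def[abs_def] .
  have sub2: "p ` J \<subseteq> I" "q ` J \<subseteq> I" using insert.prems(5,6) by auto
  have mS2[measurable]: "S \<in> borel_measurable (PiM I (\<lambda>_. Nm e))"
    using meas_S[OF sub2] unfolding S_def[abs_def] .
  have PQI[measurable]: "P \<in> I" "Q \<in> I" "Q \<in> insert Q I0" using I(1) by auto
  have psf0: "pair_sigma_finite (Nm e) (PiM I0 (\<lambda>_. Nm e))"
    by (intro pair_sigma_finite.intro sf_Nm PS.sigma_finite I(4))
  have "(\<integral>\<^sup>+w. H (c + (\<Sum>i\<in>insert j J. Complex (w (p i)) (w (q i)) * cis (th i))) \<partial>PiM I (\<lambda>_. Nm e))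
      = (\<integral>\<^sup>+w. H (c + (Complex (w P) (w Q) * cis (th j) + S w)) \<partial>PiM (insert P (insert Q I0)) (\<lambda>_. Nm e))"
    by (simp only: sum_ins I(1)[symmetric])
  also have "\<dots> = (\<integral>\<^sup>+w. \<integral>\<^sup>+a. H (c + (Complex a (w Q) * cis (th j) + S w)) \<partial>Nm e \<partial>PiM (insert Q I0) (\<lambda>_. Nm e))"
    apply (subst PS.product_nn_integral_insert[OF I(5) I(2)])
    subgoal unfolding I(1)[symmetric] by measurable
    subgoal using PQ notJ by (simp add: S_upd)
    done
  also have "\<dots> = (\<integral>\<^sup>+w. \<integral>\<^sup>+b. \<integral>\<^sup>+a. H (c + (Complex a b * cis (th j) + S w)) \<partial>Nm e \<partial>Nm e \<partial>PiM I0 (\<lambda>_. Nm e))"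
    apply (subst PS.product_nn_integral_insert[OF I(4) I(3)])
    subgoal by measurable
    subgoal using PQ notJ by (simp add: S_upd)
    done
  also have "\<dots> = (\<integral>\<^sup>+w. \<integral>\<^sup>+b. \<integral>\<^sup>+a. H (c + (Complex a b + S w)) \<partial>Nm e \<partial>Nm e \<partial>PiM I0 (\<lambda>_. Nm e))"
    by (intro nn_integral_cong rot_normal[of "\<lambda>z. H (c + (z + S _))"]) measurable
  also have "\<dots> = (\<integral>\<^sup>+b. \<integral>\<^sup>+w. \<integral>\<^sup>+a. H (c + (Complex a b + S w)) \<partial>Nm e \<partial>PiM I0 (\<lambda>_. Nm e) \<partial>Nm e)"
    by (rule pair_sigma_finite.Fubini'[OF psf0]) measurable
  also have "\<dots> = (\<integral>\<^sup>+b. \<integral>\<^sup>+a. \<integral>\<^sup>+w. H (c + (Complex a b + S w)) \<partial>PiM I0 (\<lambda>_. Nm e) \<partial>Nm e \<partial>Nm e)"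
    by (intro nn_integral_cong pair_sigma_finite.Fubini'[OF psf0]) measurable
  also have "\<dots> = (\<integral>\<^sup>+b. \<integral>\<^sup>+a. \<integral>\<^sup>+w. H ((c + Complex a b) + S w) \<partial>PiM I0 (\<lambda>_. Nm e) \<partial>Nm e \<partial>Nm e)"
    by (simp add: add.assoc)
  also have "\<dots> = (\<integral>\<^sup>+b. \<integral>\<^sup>+a. Gint e (card J) (\<lambda>z. H ((c + Complex a b) + z)) \<partial>Nm e \<partial>Nm e)"
    using insert.IH[OF I(4) _ _ _ sub0] insert.prems(2,3,4)
    by (simp add: S_def inj_on_insert)
  also have "\<dots> = Gint e (Suc (card J)) (\<lambda>z. H (c + z))"
    using conv2[of "\<lambda>z. H (c + z)" e "card J"] e by (simp add: add.assoc)
  finally show ?case using insert.hyps by simp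
qed




lemma even_bound:
  fixes g :: "real \<Rightarrow> ennreal"
  assumes [measurable]: "g \<in> borel_measurable borel" and ev: "\<And>x. g (-x) = g x"
  shows "(\<integral>\<^sup>+x. g x \<partial>lborel) \<le> 2 * (\<integral>\<^sup>+x. g x * indicator {0..} x \<partial>lborel)"
proof -
  have "(\<integral>\<^sup>+x. g x \<partial>lborel) \<le> (\<integral>\<^sup>+x. g x * indicator {0..} x + g x * indicator {..0} x \<partial>lborel)"
    by (intro nn_integral_mono) (auto split: split_indicator)
  also have "\<dots> = (\<integral>\<^sup>+x. g x * indicator {0..} x \<partial>lborel) + (\<integral>\<^sup>+x. g x * indicator {..0} x \<partial>lborel)"
    by (rule nn_integral_add) measurable
  also have "(\<integral>\<^sup>+x. g x * indicator {..0} x \<partial>lborel) = (\<integral>\<^sup>+x. g x * indicator {0..} x \<partial>lborel)"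
  proof -
    have ind: "indicator {..0} (- x) = (indicator {0..} x :: ennreal)" for x :: real
      by (simp add: indicator_def)
    show ?thesis
      using nn_integral_real_affine[of "\<lambda>x. g x * indicator {..0} x" "-1" 0] by (simp add: ev ind)
  qed
  finally show ?thesis by (simp add: mult_2)
qed

lemma int_arctan: "(\<integral>\<^sup>+s. ennreal (1 / (1 + s\<^sup>2)) \<partial>lborel) \<le> ennreal pi"
proof -
  have "(\<integral>\<^sup>+s. ennreal (1 / (1 + s\<^sup>2)) * indicator {0..} s \<partial>lborel) = ennreal (pi / 2 - arctan 0)"
  proof (rule nn_integral_FTC_atLeast)
    show "(\<lambda>s::real. 1 / (1 + s\<^sup>2)) \<in> borel_measurable borel"
    proof (rule borel_measurable_continuous_onI, intro continuous_intros ballI)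
      fix s :: real show "1 + s\<^sup>2 \<noteq> 0" by (smt (verit) zero_le_power2)
    qed
    show "DERIV arctan x :> 1 / (1 + x\<^sup>2)" for x using DERIV_arctan[of x] by (simp add: divide_inverse)
    show "0 \<le> 1 / (1 + x\<^sup>2)" for x :: real by (simp add: add_pos_nonneg)
    show "(arctan \<longlongrightarrow> pi / 2) at_top" by (rule tendsto_arctan_at_top)
  qed
  then have h: "(\<integral>\<^sup>+s. ennreal (1 / (1 + s\<^sup>2)) * indicator {0..} s \<partial>lborel) = ennreal (pi / 2)" by simp
  have "(\<integral>\<^sup>+s. ennreal (1 / (1 + s\<^sup>2)) \<partial>lborel) \<le> 2 * ennreal (pi / 2)"
    using even_bound[of "\<lambda>s. ennreal (1 / (1 + s\<^sup>2))"] h by simp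
  also have "\<dots> = ennreal pi" by (subst ennreal_numeral[symmetric], subst ennreal_mult[symmetric]) auto
  finally show ?thesis .
qed

lemma lim_aux: "((\<lambda>u::real. (u + 1) * exp (- u)) \<longlongrightarrow> 0) at_top"
proof -
  have "((\<lambda>u::real. u ^ 1 / exp u + u ^ 0 / exp u) \<longlongrightarrow> 0 + 0) at_top"
    by (intro tendsto_add tendsto_power_div_exp_0)
  then show ?thesis by (simp add: exp_minus field_simps)
qed

lemma half_int:
  fixes \<beta> \<sigma> T :: real
  assumes b: "\<beta> > 0" and s: "\<sigma> > 0" and T: "T \<ge> 0"
  shows "(\<integral>\<^sup>+x. ennreal (x * ((x\<^sup>2 * \<beta>) * indicator {T..} (x\<^sup>2 * \<beta>) * exp (- (x\<^sup>2 * \<beta>) / (2 * \<sigma>\<^sup>2)))) * indicator {0..} x \<partial>lborel)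
       = ennreal ((\<sigma>\<^sup>2 * T + 2 * \<sigma>^4) / \<beta> * exp (- T / (2 * \<sigma>\<^sup>2)))"
proof -
  define x0 where "x0 = sqrt (T / \<beta>)"
  have x0: "x0 \<ge> 0" "x0\<^sup>2 = T / \<beta>" using b T by (auto simp: x0_def)
  define F where "F x = - ((\<sigma>\<^sup>2 * (\<beta> * x\<^sup>2) + 2 * \<sigma>^4) / \<beta> * exp (- (\<beta> * x\<^sup>2) / (2 * \<sigma>\<^sup>2)))" for x
  have eq: "ennreal (x * ((x\<^sup>2 * \<beta>) * indicator {T..} (x\<^sup>2 * \<beta>) * exp (- (x\<^sup>2 * \<beta>) / (2 * \<sigma>\<^sup>2)))) * indicator {0..} x
      = ennreal (\<beta> * x ^ 3 * exp (- (\<beta> * x\<^sup>2) / (2 * \<sigma>\<^sup>2))) * indicator {x0..} x" for x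
  proof (cases "x \<ge> 0")
    case True
    have "x0 \<le> x \<longleftrightarrow> x0\<^sup>2 \<le> x\<^sup>2" using True x0(1) by (simp add: power_mono_iff)
    also have "\<dots> \<longleftrightarrow> T \<le> x\<^sup>2 * \<beta>" using b by (simp add: x0(2) pos_divide_le_eq)
    finally have iff: "x0 \<le> x \<longleftrightarrow> T \<le> x\<^sup>2 * \<beta>" .
    show ?thesis using True iff by (auto simp: indicator_def power3_eq_cube power2_eq_square mult_ac)
  next
    case False
    then show ?thesis using x0(1) by (auto simp: indicator_def)
  qed
  have "(\<integral>\<^sup>+x. ennreal (\<beta> * x ^ 3 * exp (- (\<beta> * x\<^sup>2) / (2 * \<sigma>\<^sup>2))) * indicator {x0..} x \<partial>lborel) = ennreal (0 - F x0)"
  proof (rule nn_integral_FTC_atLeast)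
    show "(\<lambda>x::real. \<beta> * x ^ 3 * exp (- (\<beta> * x\<^sup>2) / (2 * \<sigma>\<^sup>2))) \<in> borel_measurable borel" by measurable
    show "DERIV F x :> \<beta> * x ^ 3 * exp (- (\<beta> * x\<^sup>2) / (2 * \<sigma>\<^sup>2))" for x
      unfolding F_def
      using b s by (auto intro!: derivative_eq_intros simp: field_simps power2_eq_square power3_eq_cube power4_eq_xxxx)
    show "0 \<le> \<beta> * x ^ 3 * exp (- (\<beta> * x\<^sup>2) / (2 * \<sigma>\<^sup>2))" if "x0 \<le> x" for x
      using that x0(1) b by simp
    show "(F \<longlongrightarrow> 0) at_top"
    proof -
      define u where "u x = \<beta> / (2 * \<sigma>\<^sup>2) * x\<^sup>2" for x :: real
      have "filterlim (\<lambda>x::real. x ^ 2) at_top at_top"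
        by (rule filterlim_pow_at_top[OF _ filterlim_ident]) simp
      then have u: "filterlim u at_top at_top" unfolding u_def
        using b s by (intro filterlim_tendsto_pos_mult_at_top[OF tendsto_const]) auto
      have "((\<lambda>x. - (2 * \<sigma>^4 / \<beta>) * ((u x + 1) * exp (- u x))) \<longlongrightarrow> - (2 * \<sigma>^4 / \<beta>) * 0) at_top"
        by (intro tendsto_mult tendsto_const filterlim_compose[OF lim_aux u])
      moreover have "F = (\<lambda>x. - (2 * \<sigma>^4 / \<beta>) * ((u x + 1) * exp (- u x)))"
        using b s by (auto simp: F_def u_def fun_eq_iff field_simps power2_eq_square power4_eq_xxxx)
      ultimately show ?thesis by simp
    qed
  qed
  moreover have "0 - F x0 = (\<sigma>\<^sup>2 * T + 2 * \<sigma>^4) / \<beta> * exp (- T / (2 * \<sigma>\<^sup>2))"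
  proof -
    have "\<beta> * x0\<^sup>2 = T" using x0(2) b by simp
    then show ?thesis by (simp add: F_def)
  qed
  ultimately show ?thesis by (simp only: eq)
qed

lemma two_ennreal: "0 \<le> x \<Longrightarrow> 2 * ennreal x = ennreal (2 * x)"
  by (subst ennreal_numeral[symmetric], subst ennreal_mult[symmetric]) auto

lemma rad:
  fixes \<sigma> T :: real
  assumes s: "\<sigma> > 0" and T: "T \<ge> 0"
  shows "(\<integral>\<^sup>+b. \<integral>\<^sup>+a. ennreal ((a\<^sup>2 + b\<^sup>2) * indicator {T..} (a\<^sup>2 + b\<^sup>2)) \<partial>Nm \<sigma> \<partial>Nm \<sigma>)
       \<le> ennreal (2 * \<sigma>\<^sup>2 * qfun (T / (2 * \<sigma>\<^sup>2)))"
proof -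
  define f where "f v = v * indicator {T..} v * exp (- v / (2 * \<sigma>\<^sup>2))" for v :: real
  define C where "C = (1 / sqrt (2 * pi * \<sigma>\<^sup>2))\<^sup>2"
  define E where "E = exp (- T / (2 * \<sigma>\<^sup>2))"
  define A where "A = \<sigma>\<^sup>2 * T + 2 * \<sigma>^4"
  have f_nn: "f v \<ge> 0" for v using T by (auto simp: f_def indicator_def)
  have [measurable]: "f \<in> borel_measurable borel" unfolding f_def by measurable
  have C: "C = 1 / (2 * pi * \<sigma>\<^sup>2)" unfolding C_def using s by (simp add: power_divide)
  have A: "A \<ge> 0" using s T by (simp add: A_def)
  have "(\<integral>\<^sup>+b. \<integral>\<^sup>+a. ennreal ((a\<^sup>2 + b\<^sup>2) * indicator {T..} (a\<^sup>2 + b\<^sup>2)) \<partial>Nm \<sigma> \<partial>Nm \<sigma>)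
      = (\<integral>\<^sup>+b. \<integral>\<^sup>+a. ennreal (normal_density 0 \<sigma> a * normal_density 0 \<sigma> b) * ennreal ((a\<^sup>2 + b\<^sup>2) * indicator {T..} (a\<^sup>2 + b\<^sup>2)) \<partial>lborel \<partial>lborel)"
    using dens2[of "\<lambda>z. ennreal (((Re z)\<^sup>2 + (Im z)\<^sup>2) * indicator {T..} ((Re z)\<^sup>2 + (Im z)\<^sup>2))" \<sigma>] by simp
  also have "\<dots> = (\<integral>\<^sup>+b. \<integral>\<^sup>+a. ennreal C * ennreal (f (a\<^sup>2 + b\<^sup>2)) \<partial>lborel \<partial>lborel)"
    by (intro nn_integral_cong) (simp add: nd_prod f_def C_def ennreal_mult'[symmetric] mult_ac)
  also have "\<dots> = ennreal C * (\<integral>\<^sup>+b. \<integral>\<^sup>+a. ennreal (f (a\<^sup>2 + b\<^sup>2)) \<partial>lborel \<partial>lborel)"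
    by (simp add: nn_integral_cmult)
  also have "(\<integral>\<^sup>+b. \<integral>\<^sup>+a. ennreal (f (a\<^sup>2 + b\<^sup>2)) \<partial>lborel \<partial>lborel)
      = (\<integral>\<^sup>+b. \<integral>\<^sup>+s. ennreal (\<bar>b\<bar> * f (b\<^sup>2 * (1 + s\<^sup>2))) \<partial>lborel \<partial>lborel)"
  proof (rule nn_integral_cong_AE)
    show "AE b in lborel. (\<integral>\<^sup>+a. ennreal (f (a\<^sup>2 + b\<^sup>2)) \<partial>lborel) = (\<integral>\<^sup>+s. ennreal (\<bar>b\<bar> * f (b\<^sup>2 * (1 + s\<^sup>2))) \<partial>lborel)"
      using AE_lborel_singleton[of 0]
    proof eventually_elim
      case (elim b)
      have "(\<integral>\<^sup>+a. ennreal (f (a\<^sup>2 + b\<^sup>2)) \<partial>lborel) = ennreal \<bar>b\<bar> * (\<integral>\<^sup>+s. ennreal (f ((0 + b * s)\<^sup>2 + b\<^sup>2)) \<partial>lborel)"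
        using elim by (intro nn_integral_real_affine) auto
      also have "\<dots> = (\<integral>\<^sup>+s. ennreal (\<bar>b\<bar> * f (b\<^sup>2 * (1 + s\<^sup>2))) \<partial>lborel)"
        by (subst nn_integral_cmult[symmetric]) (auto simp: ennreal_mult'[symmetric] power_mult_distrib algebra_simps)
      finally show ?case .
    qed
  qed
  also have "\<dots> = (\<integral>\<^sup>+s. \<integral>\<^sup>+b. ennreal (\<bar>b\<bar> * f (b\<^sup>2 * (1 + s\<^sup>2))) \<partial>lborel \<partial>lborel)"
    by (rule lborel_pair.Fubini') measurable
  also have "\<dots> \<le> (\<integral>\<^sup>+s. 2 * (\<integral>\<^sup>+b. ennreal (\<bar>b\<bar> * f (b\<^sup>2 * (1 + s\<^sup>2))) * indicator {0..} b \<partial>lborel) \<partial>lborel)"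
    by (intro nn_integral_mono even_bound) auto
  also have "\<dots> = (\<integral>\<^sup>+s. 2 * ennreal (A / (1 + s\<^sup>2) * E) \<partial>lborel)"
  proof (intro nn_integral_cong arg_cong2[where f="(*)"] refl)
    fix s :: real
    have "(\<integral>\<^sup>+b. ennreal (\<bar>b\<bar> * f (b\<^sup>2 * (1 + s\<^sup>2))) * indicator {0..} b \<partial>lborel)
        = (\<integral>\<^sup>+b. ennreal (b * f (b\<^sup>2 * (1 + s\<^sup>2))) * indicator {0..} b \<partial>lborel)"
      by (intro nn_integral_cong) (auto simp: indicator_def)
    also have "\<dots> = ennreal (A / (1 + s\<^sup>2) * E)"
      unfolding f_def A_def E_def by (rule half_int) (use s T in \<open>auto simp: add_pos_nonneg\<close>)
    finally show "(\<integral>\<^sup>+b. ennreal (\<bar>b\<bar> * f (b\<^sup>2 * (1 + s\<^sup>2))) * indicator {0..} b \<partial>lborel) = ennreal (A / (1 + s\<^sup>2) * E)" .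
  qed
  also have "\<dots> = ennreal (2 * A * E) * (\<integral>\<^sup>+s. ennreal (1 / (1 + s\<^sup>2)) \<partial>lborel)"
    using A by (subst nn_integral_cmult[symmetric])
      (auto intro!: nn_integral_cong simp: ennreal_mult'[symmetric] E_def add_pos_nonneg two_ennreal)
  also have "\<dots> \<le> ennreal (2 * A * E) * ennreal pi"
    by (intro mult_left_mono int_arctan) auto
  finally have "(\<integral>\<^sup>+b. \<integral>\<^sup>+a. ennreal ((a\<^sup>2 + b\<^sup>2) * indicator {T..} (a\<^sup>2 + b\<^sup>2)) \<partial>Nm \<sigma> \<partial>Nm \<sigma>)
      \<le> ennreal C * (ennreal (2 * A * E) * ennreal pi)"
    by (simp add: mult_left_mono)
  also have "\<dots> = ennreal (C * (2 * A * E) * pi)"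
    using A s by (simp add: ennreal_mult'[symmetric] E_def C mult.assoc)
  also have "C * (2 * A * E) * pi = 2 * \<sigma>\<^sup>2 * qfun (T / (2 * \<sigma>\<^sup>2))"
    using s by (simp add: C A_def E_def qfun_def field_simps power2_eq_square power4_eq_xxxx)
  finally show ?thesis .
qed




lemma DERIV_Erf: "DERIV Erf z :> 2 / sqrt pi * exp (- (z\<^sup>2))"
proof -
  define a b where "a = - \<bar>z\<bar> - 1" and "b = \<bar>z\<bar> + 1"
  have "((\<lambda>u. LBINT y=0..u. exp (- (y\<^sup>2))) has_vector_derivative exp (- (z\<^sup>2))) (at z within {a..b})"
  proof -
    have c: "continuous_on {a..b} (\<lambda>y. exp (- (y\<^sup>2)))" by (intro continuous_intros)
    have ab: "a \<le> 0" "0 \<le> b" "a \<le> z" "z \<le> b" by (auto simp: a_def b_def)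
    show ?thesis using interval_integral_FTC2[of a 0 b "\<lambda>y. exp (- (y\<^sup>2))" z, OF ab(1,2) c ab(3,4)]
      by (simp add: zero_ereal_def)
  qed
  moreover have "at z within {a..b} = at z" by (rule at_within_Icc_at) (auto simp: a_def b_def)
  ultimately have "((\<lambda>u. LBINT y=0..u. exp (- (y\<^sup>2))) has_real_derivative exp (- (z\<^sup>2))) (at z)"
    by (simp add: has_real_derivative_iff_has_vector_derivative)
  then have "((\<lambda>u. 2 / sqrt pi * (LBINT y=0..u. exp (- (y\<^sup>2)))) has_real_derivative 2 / sqrt pi * exp (- (z\<^sup>2))) (at z)"
    by (rule DERIV_cmult)
  moreover have "Erf = (\<lambda>u. 2 / sqrt pi * (LBINT y=0..u. exp (- (y\<^sup>2))))"
    by (rule ext) (simp add: Erf_def)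
  ultimately show ?thesis by simp
qed

lemma normal_Icc:
  assumes s: "\<sigma> > 0" and lu: "l \<le> u"
  shows "(\<integral>\<^sup>+x. ennreal (normal_density 0 \<sigma> x) * indicator {l..u} x \<partial>lborel)
       = ennreal ((Erf (u / sqrt (2 * \<sigma>\<^sup>2)) - Erf (l / sqrt (2 * \<sigma>\<^sup>2))) / 2)"
proof -
  define F where "F x = Erf (x / sqrt (2 * \<sigma>\<^sup>2)) / 2" for x
  have "(\<integral>\<^sup>+x. ennreal (normal_density 0 \<sigma> x) * indicator {l..u} x \<partial>lborel) = ennreal (F u - F l)"
  proof (rule nn_integral_FTC_Icc[OF _ _ _ lu])
    show "normal_density 0 \<sigma> \<in> borel_measurable borel" by measurable
    show "0 \<le> normal_density 0 \<sigma> x" for x by simp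
    show "DERIV F x :> normal_density 0 \<sigma> x" for x
    proof -
      have q: "sqrt (2 * \<sigma>\<^sup>2) > 0" using s by simp
      have "DERIV F x :> 2 / sqrt pi * exp (- ((x / sqrt (2 * \<sigma>\<^sup>2))\<^sup>2)) * (1 / sqrt (2 * \<sigma>\<^sup>2)) / 2"
      proof -
        have d1: "DERIV (\<lambda>x. x / sqrt (2 * \<sigma>\<^sup>2)) x :> 1 / sqrt (2 * \<sigma>\<^sup>2)"
          by (rule DERIV_cdivide[OF DERIV_ident])
        show ?thesis unfolding F_def
          by (rule DERIV_cdivide[OF DERIV_chain2[OF DERIV_Erf d1]])
      qed
      moreover have "2 / sqrt pi * exp (- ((x / sqrt (2 * \<sigma>\<^sup>2))\<^sup>2)) * (1 / sqrt (2 * \<sigma>\<^sup>2)) / 2 = normal_density 0 \<sigma> x"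
        using s by (simp add: normal_density_def power_divide real_sqrt_mult field_simps)
      ultimately show ?thesis by simp
    qed
  qed
  then show ?thesis by (simp add: F_def diff_divide_distrib)
qed

lemma box_prob:
  assumes s: "\<sigma> > 0" and t: "\<tau> > 0"
  shows "(\<integral>\<^sup>+x. indicator {x. \<bar>a + x\<bar> < \<tau>} x \<partial>Nm \<sigma>)
       \<le> ennreal ((Erf ((- a + \<tau>) / sqrt (2 * \<sigma>\<^sup>2)) - Erf ((- a - \<tau>) / sqrt (2 * \<sigma>\<^sup>2))) / 2)"
proof -
  have "(\<integral>\<^sup>+x. indicator {x. \<bar>a + x\<bar> < \<tau>} x \<partial>Nm \<sigma>)
      = (\<integral>\<^sup>+x. ennreal (normal_density 0 \<sigma> x) * indicator {x. \<bar>a + x\<bar> < \<tau>} x \<partial>lborel)"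
    by (rule nn_integral_density) measurable
  also have "\<dots> \<le> (\<integral>\<^sup>+x. ennreal (normal_density 0 \<sigma> x) * indicator {- a - \<tau>..- a + \<tau>} x \<partial>lborel)"
    by (intro nn_integral_mono) (auto simp: indicator_def)
  also have "\<dots> = ennreal ((Erf ((- a + \<tau>) / sqrt (2 * \<sigma>\<^sup>2)) - Erf ((- a - \<tau>) / sqrt (2 * \<sigma>\<^sup>2))) / 2)"
    using t by (intro normal_Icc s) simp
  finally show ?thesis .
qed




lemma Erf_mono: "l \<le> u \<Longrightarrow> Erf l \<le> Erf u"
  by (rule DERIV_nonneg_imp_nondecreasing) (auto intro!: exI DERIV_Erf)

lemma noise_dist:
  fixes H :: "complex \<Rightarrow> ennreal"
  assumes K: "K \<ge> 1" and e: "e > 0" and [measurable]: "H \<in> borel_measurable borel"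
  shows "(\<integral>\<^sup>+w. H (dft K (noise_vec K w) k) \<partial>noise_measure K e)
       = (\<integral>\<^sup>+b. \<integral>\<^sup>+a. H (Complex a b) \<partial>Nm (e * sqrt K) \<partial>Nm (e * sqrt K))"
proof -
  define th where "th j = - 2 * pi * real j * real k / real K" for j
  have d: "dft K (noise_vec K w) k = 0 + (\<Sum>j\<in>{..<K}. Complex (w ((\<lambda>j. j) j)) (w ((\<lambda>j. K + j) j)) * cis (th j))" for w
    by (simp add: dft_def noise_vec_def th_def)
  have "(\<integral>\<^sup>+w. H (dft K (noise_vec K w) k) \<partial>noise_measure K e)
      = (\<integral>\<^sup>+w. H (0 + (\<Sum>j\<in>{..<K}. Complex (w ((\<lambda>j. j) j)) (w ((\<lambda>j. K + j) j)) * cis (th j))) \<partial>PiM {..<2*K} (\<lambda>_. Nm e))"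
    unfolding d noise_measure_def ..
  also have "\<dots> = Gint e (card {..<K}) (\<lambda>z. H (0 + z))"
    by (rule ind) (auto simp: e inj_on_def)
  also have "\<dots> = (\<integral>\<^sup>+b. \<integral>\<^sup>+a. H (Complex a b) \<partial>Nm (e * sqrt K) \<partial>Nm (e * sqrt K))"
    using K by (simp add: Gint_def)
  finally show ?thesis .
qed

lemma errf_le:
  assumes t: "\<tau> > 0"
  shows "ennreal (errf S \<tau> (Complex a b))
     \<le> ennreal ((a\<^sup>2 + b\<^sup>2) * indicator {(if \<tau> \<ge> cmod S then (\<tau> - cmod S)\<^sup>2 else 0)..} (a\<^sup>2 + b\<^sup>2))
       + ennreal ((cmod S)\<^sup>2) * (indicator {x. \<bar>Re S + x\<bar> < \<tau>} a * indicator {x. \<bar>Im S + x\<bar> < \<tau>} b)"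
proof (cases "cmod (S + Complex a b) \<ge> \<tau>")
  case True
  define T where "T = (if \<tau> \<ge> cmod S then (\<tau> - cmod S)\<^sup>2 else 0)"
  have n2: "(cmod (Complex a b))\<^sup>2 = a\<^sup>2 + b\<^sup>2" by (simp add: cmod_power2)
  have "T \<le> a\<^sup>2 + b\<^sup>2"
  proof (cases "\<tau> \<ge> cmod S")
    case True2: True
    have "cmod (S + Complex a b) \<le> cmod S + cmod (Complex a b)" by (rule norm_triangle_ineq)
    then have "\<tau> - cmod S \<le> cmod (Complex a b)" using True by linarith
    then have "(\<tau> - cmod S)\<^sup>2 \<le> (cmod (Complex a b))\<^sup>2" using True2 by (intro power_mono) auto
    then show ?thesis using True2 n2 by (simp add: T_def)
  next
    case False
    then show ?thesis by (simp add: T_def)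
  qed
  then have "errf S \<tau> (Complex a b) = (a\<^sup>2 + b\<^sup>2) * indicator {T..} (a\<^sup>2 + b\<^sup>2)"
    using True n2 by (simp add: errf_def)
  then show ?thesis unfolding T_def[symmetric] by (simp add: add_increasing2)
next
  case False
  have "\<bar>Re (S + Complex a b)\<bar> < \<tau>" "\<bar>Im (S + Complex a b)\<bar> < \<tau>"
    using False abs_Re_le_cmod[of "S + Complex a b"] abs_Im_le_cmod[of "S + Complex a b"] by linarith+
  then have "errf S \<tau> (Complex a b) = (cmod S)\<^sup>2 * (indicator {x. \<bar>Re S + x\<bar> < \<tau>} a * indicator {x. \<bar>Im S + x\<bar> < \<tau>} b)"
    using False by (simp add: errf_def indicator_def)
  then show ?thesis
    by (simp add: ennreal_mult' ennreal_indicator[symmetric] add_increasing)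
qed

lemma gint_bound:
  assumes s: "\<sigma> > 0" and t: "\<tau> > 0"
  shows "(\<integral>\<^sup>+b. \<integral>\<^sup>+a. ennreal (errf S \<tau> (Complex a b)) \<partial>Nm \<sigma> \<partial>Nm \<sigma>)
    \<le> ennreal (2 * \<sigma>\<^sup>2 * qfun ((if \<tau> \<ge> cmod S then (\<tau> - cmod S)\<^sup>2 else 0) / (2 * \<sigma>\<^sup>2))
        + (cmod S)\<^sup>2 * (((Erf ((- Re S + \<tau>) / sqrt (2 * \<sigma>\<^sup>2)) - Erf ((- Re S - \<tau>) / sqrt (2 * \<sigma>\<^sup>2))) / 2)
                      * ((Erf ((- Im S + \<tau>) / sqrt (2 * \<sigma>\<^sup>2)) - Erf ((- Im S - \<tau>) / sqrt (2 * \<sigma>\<^sup>2))) / 2)))"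
proof -
  define T where "T = (if \<tau> \<ge> cmod S then (\<tau> - cmod S)\<^sup>2 else 0)"
  define c where "c = ennreal ((cmod S)\<^sup>2)"
  define ia where "ia x = (indicator {x. \<bar>Re S + x\<bar> < \<tau>} x :: ennreal)" for x :: real
  define ib where "ib x = (indicator {x. \<bar>Im S + x\<bar> < \<tau>} x :: ennreal)" for x :: real
  define E1 where "E1 = (Erf ((- Re S + \<tau>) / sqrt (2 * \<sigma>\<^sup>2)) - Erf ((- Re S - \<tau>) / sqrt (2 * \<sigma>\<^sup>2))) / 2"
  define E2 where "E2 = (Erf ((- Im S + \<tau>) / sqrt (2 * \<sigma>\<^sup>2)) - Erf ((- Im S - \<tau>) / sqrt (2 * \<sigma>\<^sup>2))) / 2"
  have T: "T \<ge> 0" by (simp add: T_def)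
  have E1: "E1 \<ge> 0" unfolding E1_def using t s by (auto intro!: Erf_mono divide_right_mono)
  have E2: "E2 \<ge> 0" unfolding E2_def using t s by (auto intro!: Erf_mono divide_right_mono)
  have [measurable]: "ia \<in> borel_measurable borel" "ib \<in> borel_measurable borel"
    unfolding ia_def[abs_def] ib_def[abs_def] by measurable
  have "(\<integral>\<^sup>+b. \<integral>\<^sup>+a. ennreal (errf S \<tau> (Complex a b)) \<partial>Nm \<sigma> \<partial>Nm \<sigma>)
      \<le> (\<integral>\<^sup>+b. \<integral>\<^sup>+a. ennreal ((a\<^sup>2 + b\<^sup>2) * indicator {T..} (a\<^sup>2 + b\<^sup>2)) + c * (ia a * ib b) \<partial>Nm \<sigma> \<partial>Nm \<sigma>)"
    unfolding T_def c_def ia_def ib_def by (intro nn_integral_mono errf_le t)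
  also have "\<dots> = (\<integral>\<^sup>+b. (\<integral>\<^sup>+a. ennreal ((a\<^sup>2 + b\<^sup>2) * indicator {T..} (a\<^sup>2 + b\<^sup>2)) \<partial>Nm \<sigma>) + (\<integral>\<^sup>+a. c * (ia a * ib b) \<partial>Nm \<sigma>) \<partial>Nm \<sigma>)"
    by (intro nn_integral_cong nn_integral_add) auto
  also have "\<dots> = (\<integral>\<^sup>+b. \<integral>\<^sup>+a. ennreal ((a\<^sup>2 + b\<^sup>2) * indicator {T..} (a\<^sup>2 + b\<^sup>2)) \<partial>Nm \<sigma> \<partial>Nm \<sigma>) + (\<integral>\<^sup>+b. \<integral>\<^sup>+a. c * (ia a * ib b) \<partial>Nm \<sigma> \<partial>Nm \<sigma>)"
    by (rule nn_integral_add) measurable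
  also have "(\<integral>\<^sup>+b. \<integral>\<^sup>+a. c * (ia a * ib b) \<partial>Nm \<sigma> \<partial>Nm \<sigma>) = c * ((\<integral>\<^sup>+a. ia a \<partial>Nm \<sigma>) * (\<integral>\<^sup>+b. ib b \<partial>Nm \<sigma>))"
  proof -
    have "(\<integral>\<^sup>+b. \<integral>\<^sup>+a. c * (ia a * ib b) \<partial>Nm \<sigma> \<partial>Nm \<sigma>) = (\<integral>\<^sup>+b. (c * ib b) * (\<integral>\<^sup>+a. ia a \<partial>Nm \<sigma>) \<partial>Nm \<sigma>)"
      by (intro nn_integral_cong) (simp add: nn_integral_cmult[symmetric] mult_ac)
    also have "\<dots> = c * ((\<integral>\<^sup>+a. ia a \<partial>Nm \<sigma>) * (\<integral>\<^sup>+b. ib b \<partial>Nm \<sigma>))"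
      by (simp add: nn_integral_multc nn_integral_cmult mult_ac)
    finally show ?thesis .
  qed
  also have "\<dots> \<le> c * (ennreal E1 * ennreal E2)"
    unfolding ia_def ib_def E1_def E2_def
    by (intro mult_left_mono mult_mono box_prob s t) auto
  also have "(\<integral>\<^sup>+b. \<integral>\<^sup>+a. ennreal ((a\<^sup>2 + b\<^sup>2) * indicator {T..} (a\<^sup>2 + b\<^sup>2)) \<partial>Nm \<sigma> \<partial>Nm \<sigma>)
      \<le> ennreal (2 * \<sigma>\<^sup>2 * qfun (T / (2 * \<sigma>\<^sup>2)))"
    by (rule rad[OF s T])
  finally have "(\<integral>\<^sup>+b. \<integral>\<^sup>+a. ennreal (errf S \<tau> (Complex a b)) \<partial>Nm \<sigma> \<partial>Nm \<sigma>)
     \<le> ennreal (2 * \<sigma>\<^sup>2 * qfun (T / (2 * \<sigma>\<^sup>2))) + c * (ennreal E1 * ennreal E2)"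
    by (simp add: add_right_mono)
  also have "\<dots> = ennreal (2 * \<sigma>\<^sup>2 * qfun (T / (2 * \<sigma>\<^sup>2)) + (cmod S)\<^sup>2 * (E1 * E2))"
  proof -
    have q: "qfun (T / (2 * \<sigma>\<^sup>2)) \<ge> 0" using T s by (simp add: qfun_def)
    have X: "2 * \<sigma>\<^sup>2 * qfun (T / (2 * \<sigma>\<^sup>2)) \<ge> 0" using q by simp
    have Y: "(cmod S)\<^sup>2 * (E1 * E2) \<ge> 0" using E1 E2 by simp
    have "ennreal (2 * \<sigma>\<^sup>2 * qfun (T / (2 * \<sigma>\<^sup>2)) + (cmod S)\<^sup>2 * (E1 * E2))
        = ennreal (2 * \<sigma>\<^sup>2 * qfun (T / (2 * \<sigma>\<^sup>2))) + ennreal ((cmod S)\<^sup>2 * (E1 * E2))"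
      by (rule ennreal_plus[OF X Y])
    also have "ennreal ((cmod S)\<^sup>2 * (E1 * E2)) = c * (ennreal E1 * ennreal E2)"
      unfolding c_def using E1 E2 by (simp add: ennreal_mult)
    finally show ?thesis ..
  qed
  finally show ?thesis unfolding T_def E1_def E2_def .
qed

lemma meas_errf[measurable]: "(\<lambda>z. ennreal (errf a t z)) \<in> borel_measurable borel"
  unfolding errf_def by measurable

lemma meas_dft_noise[measurable]:
  "(\<lambda>w. dft K (noise_vec K w) k) \<in> borel_measurable (noise_measure K e)"
proof -
  define th where "th j = - 2 * pi * real j * real k / real K" for j
  have d: "(\<lambda>w. dft K (noise_vec K w) k) = (\<lambda>w. \<Sum>j\<in>{..<K}. Complex (w ((\<lambda>j. j) j)) (w ((\<lambda>j. K + j) j)) * cis (th j))"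
    by (simp add: dft_def noise_vec_def th_def)
  show ?thesis unfolding d noise_measure_def by (rule meas_S) auto
qed

theorem theorem1:
  fixes K :: nat and eps tau :: real and s :: "nat \<Rightarrow> complex"
  assumes "K \<ge> 1" and "eps > 0" and "tau > 0"
  shows "(1 / ennreal (real K)) *
           (\<integral>\<^sup>+ w. ennreal (sqnorm K (\<lambda>k. hard_threshold K tau (\<lambda>j. s j + noise_vec K w j) k - s k))
              \<partial>noise_measure K eps)
         \<le> ennreal (2 * eps\<^sup>2 * G tau K eps s)"
proof -
  note K = assms(1) and e = assms(2) and t = assms(3)
  define \<sigma> where "\<sigma> = eps * sqrt K"
  have s0: "\<sigma> > 0" using K e by (simp add: \<sigma>_def)
  have s2: "2 * \<sigma>\<^sup>2 = 2 * eps\<^sup>2 * real K" by (simp add: \<sigma>_def power_mult_distrib)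
  have K0: "real K > 0" using K by simp
  define B where "B k = 2 * \<sigma>\<^sup>2 * qfun ((if tau \<ge> cmod (dft K s k) then (tau - cmod (dft K s k))\<^sup>2 else 0) / (2 * \<sigma>\<^sup>2))
        + (cmod (dft K s k))\<^sup>2 * (((Erf ((- Re (dft K s k) + tau) / sqrt (2 * \<sigma>\<^sup>2)) - Erf ((- Re (dft K s k) - tau) / sqrt (2 * \<sigma>\<^sup>2))) / 2)
                      * ((Erf ((- Im (dft K s k) + tau) / sqrt (2 * \<sigma>\<^sup>2)) - Erf ((- Im (dft K s k) - tau) / sqrt (2 * \<sigma>\<^sup>2))) / 2))" for k
  have Bnn: "B k \<ge> 0" for k
  proof -
    have "0 \<le> B k"
      unfolding B_def using s0 t
      by (intro add_nonneg_nonneg mult_nonneg_nonneg divide_nonneg_pos Erf_mono diff_ge_0_iff_ge[THEN iffD2])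
         (auto simp: qfun_def intro!: divide_nonneg_pos divide_right_mono)
    then show ?thesis .
  qed
  have errf_nn: "errf a tau z \<ge> 0" for a z by (simp add: errf_def)
  have pt: "ennreal (sqnorm K (\<lambda>k. hard_threshold K tau (\<lambda>j. s j + noise_vec K w j) k - s k))
      = (\<Sum>k<K. ennreal (1 / real K) * ennreal (errf (dft K s k) tau (dft K (noise_vec K w) k)))" for w
  proof -
    have "sqnorm K (\<lambda>k. hard_threshold K tau (\<lambda>j. s j + noise_vec K w j) k - s k)
        = (\<Sum>k<K. (1 / real K) * errf (dft K s k) tau (dft K (noise_vec K w) k))"
      using K by (simp add: sqnorm_ht sum_distrib_left)
    moreover have "(\<Sum>k<K. ennreal (1 / real K) * ennreal (errf (dft K s k) tau (dft K (noise_vec K w) k)))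
        = (\<Sum>k<K. ennreal ((1 / real K) * errf (dft K s k) tau (dft K (noise_vec K w) k)))"
      by (intro sum.cong refl ennreal_mult[symmetric]) (auto simp: errf_nn)
    moreover have "\<dots> = ennreal (\<Sum>k<K. (1 / real K) * errf (dft K s k) tau (dft K (noise_vec K w) k))"
      by (rule sum_ennreal) (simp add: errf_nn)
    ultimately show ?thesis by simp
  qed
  have "(\<integral>\<^sup>+ w. ennreal (sqnorm K (\<lambda>k. hard_threshold K tau (\<lambda>j. s j + noise_vec K w j) k - s k)) \<partial>noise_measure K eps)
      = (\<Sum>k<K. \<integral>\<^sup>+ w. ennreal (1 / real K) * ennreal (errf (dft K s k) tau (dft K (noise_vec K w) k)) \<partial>noise_measure K eps)"
    unfolding pt by (rule nn_integral_sum) measurable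
  also have "\<dots> = (\<Sum>k<K. ennreal (1 / real K) * \<integral>\<^sup>+ w. ennreal (errf (dft K s k) tau (dft K (noise_vec K w) k)) \<partial>noise_measure K eps)"
    by (intro sum.cong refl nn_integral_cmult) measurable
  also have "\<dots> = (\<Sum>k<K. ennreal (1 / real K) * (\<integral>\<^sup>+b. \<integral>\<^sup>+a. ennreal (errf (dft K s k) tau (Complex a b)) \<partial>Nm \<sigma> \<partial>Nm \<sigma>))"
    unfolding \<sigma>_def by (intro sum.cong refl arg_cong2[where f="(*)"] noise_dist K e) measurable
  also have "\<dots> \<le> (\<Sum>k<K. ennreal (1 / real K) * ennreal (B k))"
    unfolding B_def by (intro sum_mono mult_left_mono gint_bound s0 t) auto
  also have "\<dots> = ennreal (\<Sum>k<K. (1 / real K) * B k)"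
  proof -
    show ?thesis using Bnn by (simp add: ennreal_mult[symmetric])
  qed
  finally have main: "(\<integral>\<^sup>+ w. ennreal (sqnorm K (\<lambda>k. hard_threshold K tau (\<lambda>j. s j + noise_vec K w j) k - s k)) \<partial>noise_measure K eps)
      \<le> ennreal (\<Sum>k<K. (1 / real K) * B k)" .
  have eq: "(1 / real K) * (\<Sum>k<K. (1 / real K) * B k) = 2 * eps\<^sup>2 * G tau K eps s"
  proof -
    define P1 where "P1 k = (if tau \<ge> cmod (dft K s k)
         then qfun ((tau - cmod (dft K s k))\<^sup>2 / (2 * eps\<^sup>2 * real K)) else 0)
        + (if tau < cmod (dft K s k) then 1 else 0)" for k
    define P2 where "P2 k = (cmod (dft K s k))\<^sup>2 / (4 * real K)
        * (Erf ((- Re (dft K s k) + tau) / sqrt (2 * eps\<^sup>2 * real K))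
           - Erf ((- Re (dft K s k) - tau) / sqrt (2 * eps\<^sup>2 * real K)))
        * (Erf ((- Im (dft K s k) + tau) / sqrt (2 * eps\<^sup>2 * real K))
           - Erf ((- Im (dft K s k) - tau) / sqrt (2 * eps\<^sup>2 * real K)))" for k
    have G_eq: "G tau K eps s = (1 / real K) * (\<Sum>k<K. P1 k) + (1 / (2 * real K * eps\<^sup>2)) * (\<Sum>k<K. P2 k)"
      unfolding G_def P1_def P2_def ..
    have trm: "(1 / real K) * ((1 / real K) * B k)
      = 2 * eps\<^sup>2 * ((1 / real K) * P1 k) + 2 * eps\<^sup>2 * ((1 / (2 * real K * eps\<^sup>2)) * P2 k)" for k
    proof -
      have B2: "B k = 2 * eps\<^sup>2 * real K * P1 k + 4 * P2 k * real K / 4 * 1"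
        unfolding B_def P1_def P2_def s2 using K0 e by (auto simp: qfun_def field_simps)
      show ?thesis unfolding B2 using K0 e by (simp add: field_simps power2_eq_square)
    qed
    have "(1 / real K) * (\<Sum>k<K. (1 / real K) * B k) = (\<Sum>k<K. (1 / real K) * ((1 / real K) * B k))"
      by (simp add: sum_distrib_left)
    also have "\<dots> = (\<Sum>k<K. 2 * eps\<^sup>2 * ((1 / real K) * P1 k) + 2 * eps\<^sup>2 * ((1 / (2 * real K * eps\<^sup>2)) * P2 k))"
      by (simp only: trm)
    also have "\<dots> = 2 * eps\<^sup>2 * ((1 / real K) * (\<Sum>k<K. P1 k) + (1 / (2 * real K * eps\<^sup>2)) * (\<Sum>k<K. P2 k))"
      by (simp only: sum.distrib sum_distrib_left[symmetric] distrib_left)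
    also have "\<dots> = 2 * eps\<^sup>2 * G tau K eps s" by (simp only: G_eq)
    finally show ?thesis .
  qed
  have "(1 / ennreal (real K)) * (\<integral>\<^sup>+ w. ennreal (sqnorm K (\<lambda>k. hard_threshold K tau (\<lambda>j. s j + noise_vec K w j) k - s k)) \<partial>noise_measure K eps)
      \<le> (1 / ennreal (real K)) * ennreal (\<Sum>k<K. (1 / real K) * B k)"
    by (intro mult_left_mono main) auto
  also have "\<dots> = ennreal ((1 / real K) * (\<Sum>k<K. (1 / real K) * B k))"
  proof -
    have X: "(\<Sum>k<K. (1 / real K) * B k) \<ge> 0" using Bnn K0 by (intro sum_nonneg) simp
    have i: "1 / ennreal (real K) = ennreal (1 / real K)"
      by (metis divide_ennreal ennreal_1 zero_le_one K0)
    show ?thesis unfolding i using X K0 by (intro ennreal_mult[symmetric]) auto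
  qed
  also have "\<dots> = ennreal (2 * eps\<^sup>2 * G tau K eps s)" by (simp only: eq)
  finally show ?thesis .
qed


end
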